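(* Let $a\in\mathbb{C}$, let $v=\{v_n\}_{n=1}^\infty\in\ell^1(\mathbb{N})$ be a complex sequence and $V=\mathrm{diag}(v_1,v_2,\dots)$. Then \[ \sigma_{\mathrm p}(J_a+V)\subset\{\pm2\}\cup\Big\{z\in\mathbb{C}\setminus[-2,2]\ \Big|\ \sqrt{|z^2-4|}\le g_a(z)\,\|v\|_{\ell^1}\Big\}. \]
   Context: $\mathbb{N}=\{1,2,\dots\}$. For $a\in\mathbb{C}$, $J_a$ is the operator on $\ell^2(\mathbb{N})$ with $(J_a\psi)_1=a\psi_1+\psi_2$ and $(J_a\psi)_n=\psi_{n-1}+\psi_{n+1}$ for $n\ge2$. Every $z\in\mathbb{C}\setminus[-2,2]$ can be written uniquely as $z=k+k^{-1}$ with $0<|k|<1$, and for such $z$ one defines \[ g_a(z):=\sup_{n\in\mathbb{N}}\Big|1-\frac{k-a}{1-ak}\,k^{2n-1}\Big|, \] with the convention $g_a(a+a^{-1})=+\infty$ when $|a|>1$ (where $1-ak=0$). $\sigma_{\mathrm p}$ denotes the set of eigenvalues. *)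

theory Defs
  imports "HOL-Analysis.Analysis"
begin

text \<open>Sequences indexed by the paper's N = {1,2,...} are represented 0-based:
  the paper's psi_n is our psi (n - 1).\<close>

definition l2seq :: "(nat \<Rightarrow> complex) \<Rightarrow> bool" where
  "l2seq \<psi> \<longleftrightarrow> summable (\<lambda>n. (cmod (\<psi> n))\<^sup>2)"

definition jacobi_apply :: "complex \<Rightarrow> (nat \<Rightarrow> complex) \<Rightarrow> (nat \<Rightarrow> complex) \<Rightarrow> nat \<Rightarrow> complex" where
  "jacobi_apply a v \<psi> n =
     (if n = 0 then a * \<psi> 0 + \<psi> 1 else \<psi> (n - 1) + \<psi> (n + 1)) + v n * \<psi> n"

definition point_spectrum :: "complex \<Rightarrow> (nat \<Rightarrow> complex) \<Rightarrow> complex set" where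
  "point_spectrum a v =
     {z. \<exists>\<psi>. l2seq \<psi> \<and> \<psi> \<noteq> (\<lambda>_. 0) \<and> (\<forall>n. jacobi_apply a v \<psi> n = z * \<psi> n)}"

definition kpar :: "complex \<Rightarrow> complex" where
  "kpar z = (THE k. 0 < cmod k \<and> cmod k < 1 \<and> z = k + inverse k)"

definition g_fun :: "complex \<Rightarrow> complex \<Rightarrow> ereal" where
  "g_fun a z = (let k = kpar z in
     if 1 - a * k = 0 then \<infinity>
     else (SUP n\<in>{1::nat..}. ereal (cmod (1 - (k - a) / (1 - a * k) * k ^ (2 * n - 1)))))"

definition l1norm :: "(nat \<Rightarrow> complex) \<Rightarrow> real" where
  "l1norm v = (\<Sum>n. cmod (v n))"

end

theory Submission
  imports Defs
begin


lemma kpar_ex: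
  fixes z :: complex
  assumes "z \<notin> complex_of_real ` {-2..2}"
  shows "\<exists>k. 0 < cmod k \<and> cmod k < 1 \<and> z = k + inverse k"
proof -
  define s where "s = csqrt (z^2 - 4)"
  define k1 where "k1 = (z + s) / 2"
  define k2 where "k2 = (z - s) / 2"
  have ss: "s^2 = z^2 - 4" unfolding s_def by simp
  have prod: "k1 * k2 = 1" unfolding k1_def k2_def
    using ss by (simp add: field_simps power2_eq_square)
  have sum: "k1 + k2 = z" unfolding k1_def k2_def by (simp add: field_simps)
  have nz1: "k1 \<noteq> 0" using prod by auto
  have nz2: "k2 \<noteq> 0" using prod by auto
  have i1: "inverse k1 = k2" using prod by (simp add: inverse_unique)
  have i2: "inverse k2 = k1" using prod by (metis inverse_inverse_eq i1)
  have m: "cmod k1 * cmod k2 = 1" using prod by (metis norm_mult norm_one)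
  consider "cmod k1 < 1" | "cmod k1 > 1" | "cmod k1 = 1" by linarith
  then show ?thesis
  proof cases
    case 1 then show ?thesis using nz1 i1 sum by (intro exI[of _ k1]) auto
  next
    case 2
    have "cmod k2 < 1"
    proof (rule ccontr)
      assume "\<not> cmod k2 < 1"
      then have "cmod k1 * 1 \<le> cmod k1 * cmod k2"
        by (intro mult_left_mono) auto
      then show False using m 2 by simp
    qed
    then show ?thesis using nz2 i2 sum by (intro exI[of _ k2]) auto
  next
    case 3
    have "k1 * cnj k1 = complex_of_real ((cmod k1)\<^sup>2)" by (rule complex_norm_square[symmetric])
    then have "k1 * cnj k1 = k1 * k2" using 3 prod by simp
    then have "k2 = cnj k1" using nz1 by simp
    then have "z = complex_of_real (2 * Re k1)" using sum complex_add_cnj by metis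
    moreover have "\<bar>Re k1\<bar> \<le> 1" using abs_Re_le_cmod[of k1] 3 by simp
    ultimately have "z \<in> complex_of_real ` {-2..2}"
      by (intro image_eqI[where x="2 * Re k1"]) auto
    then show ?thesis using assms by simp
  qed
qed

lemma kpar_uniq:
  fixes k k' :: complex
  assumes "k \<noteq> 0" "k' \<noteq> 0" "cmod k < 1" "cmod k' < 1" "k + inverse k = k' + inverse k'"
  shows "k = k'"
proof (rule ccontr)
  assume ne: "k \<noteq> k'"
  have e1: "k - k' = inverse k' - inverse k" using assms(5) by (simp add: algebra_simps)
  also have "\<dots> = (k - k') * inverse (k * k')" using assms(1,2)
    by (simp add: inverse_diff_inverse inverse_mult_distrib algebra_simps)
  finally have "(k - k') * 1 = (k - k') * inverse (k * k')" by simp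
  then have "1 = inverse (k * k')" using ne mult_left_cancel[of "k - k'" 1 "inverse (k * k')"] by simp
  then have "k * k' = 1" by (metis inverse_1 inverse_inverse_eq)
  then have "cmod k * cmod k' = 1" by (metis norm_mult norm_one)
  moreover have "cmod k * cmod k' < 1 * 1"
    using assms by (intro mult_strict_mono) auto
  ultimately show False by simp
qed

lemma kpar_props:
  fixes z :: complex
  assumes "z \<notin> complex_of_real ` {-2..2}"
  shows "0 < cmod (kpar z) \<and> cmod (kpar z) < 1 \<and> z = kpar z + inverse (kpar z)"
proof -
  obtain k where k: "0 < cmod k \<and> cmod k < 1 \<and> z = k + inverse k" using kpar_ex[OF assms] by blast
  have "\<exists>!k. 0 < cmod k \<and> cmod k < 1 \<and> z = k + inverse k"
  proof (rule ex1I[of _ k])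
    show "0 < cmod k \<and> cmod k < 1 \<and> z = k + inverse k" by fact
    fix k' assume "0 < cmod k' \<and> cmod k' < 1 \<and> z = k' + inverse k'"
    then show "k' = k" using k kpar_uniq[of k' k] by auto
  qed
  then show ?thesis unfolding kpar_def by (rule theI')
qed

lemma l2_tendsto:
  assumes "l2seq \<psi>"
  shows "\<psi> \<longlonglongrightarrow> 0"
proof -
  have "(\<lambda>n. (cmod (\<psi> n))\<^sup>2) \<longlonglongrightarrow> 0"
    using assms unfolding l2seq_def by (rule summable_LIMSEQ_zero)
  then have "(\<lambda>n. sqrt ((cmod (\<psi> n))\<^sup>2)) \<longlonglongrightarrow> sqrt 0" by (intro tendsto_intros)
  then have "(\<lambda>n. cmod (\<psi> n)) \<longlonglongrightarrow> 0" by simp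
  then show ?thesis by (simp add: tendsto_norm_zero_iff)
qed



lemma re_bound:
  fixes a b :: complex and x :: real
  shows "\<bar>x * Re (a * cnj b)\<bar> \<le> \<bar>x\<bar> * ((cmod a)\<^sup>2 + (cmod b)\<^sup>2) / 2"
proof -
  have "\<bar>Re (a * cnj b)\<bar> \<le> cmod (a * cnj b)" by (rule abs_Re_le_cmod)
  also have "\<dots> = cmod a * cmod b" by (simp add: norm_mult)
  also have "\<dots> \<le> ((cmod a)\<^sup>2 + (cmod b)\<^sup>2) / 2"
    using sum_squares_bound[of "cmod a" "cmod b"] by (simp add: power2_eq_square)
  finally have "\<bar>Re (a * cnj b)\<bar> \<le> ((cmod a)\<^sup>2 + (cmod b)\<^sup>2) / 2" .
  then have "\<bar>x\<bar> * \<bar>Re (a * cnj b)\<bar> \<le> \<bar>x\<bar> * (((cmod a)\<^sup>2 + (cmod b)\<^sup>2) / 2)"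
    by (rule mult_left_mono) auto
  then show ?thesis by (simp add: abs_mult)
qed

lemma Q_identity:
  fixes a b :: complex and x :: real
  shows "(cmod (of_real x * a - b))\<^sup>2 + (cmod a)\<^sup>2 - x * Re ((of_real x * a - b) * cnj a)
       = (cmod a)\<^sup>2 + (cmod b)\<^sup>2 - x * Re (a * cnj b)"
  unfolding cmod_power2 by (simp add: power2_eq_square algebra_simps)

lemma Q_step:
  fixes a b w :: complex and x :: real
  assumes "\<bar>x\<bar> < 2"
  shows "(cmod (of_real x * a - b - w * a))\<^sup>2 + (cmod a)\<^sup>2 - x * Re ((of_real x * a - b - w * a) * cnj a)
       \<ge> (cmod a)\<^sup>2 + (cmod b)\<^sup>2 - x * Re (a * cnj b) - 8 * cmod w * ((cmod a)\<^sup>2 + (cmod b)\<^sup>2)"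
proof -
  define e0 where "e0 = of_real x * a - b"
  have h1: "(cmod (e0 - w * a))\<^sup>2 \<ge> (cmod e0)\<^sup>2 - 2 * cmod e0 * (cmod w * cmod a)"
  proof (cases "cmod e0 \<ge> cmod w * cmod a")
    case True
    have "cmod (e0 - w * a) \<ge> cmod e0 - cmod w * cmod a"
      using norm_triangle_ineq2[of e0 "w*a"] by (simp add: norm_mult)
    then have "(cmod (e0 - w * a))\<^sup>2 \<ge> (cmod e0 - cmod w * cmod a)\<^sup>2"
      using True by (intro power_mono) auto
    moreover have "(cmod e0 - cmod w * cmod a)\<^sup>2 = (cmod e0)\<^sup>2 - 2 * cmod e0 * (cmod w * cmod a) + (cmod w * cmod a)\<^sup>2"
      by (simp add: power2_diff)
    moreover have "(cmod w * cmod a)\<^sup>2 \<ge> 0" by (rule zero_le_power2)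
    ultimately show ?thesis by linarith
  next
    case False
    then have "(cmod e0)\<^sup>2 - 2 * cmod e0 * (cmod w * cmod a) \<le> 0"
    proof -
      have "cmod e0 * cmod e0 \<le> cmod e0 * (cmod w * cmod a)"
        using False by (intro mult_left_mono) auto
      moreover have "cmod e0 * (cmod w * cmod a) \<ge> 0" by simp
      moreover have "2 * cmod e0 * (cmod w * cmod a) = 2 * (cmod e0 * (cmod w * cmod a))" by simp
      moreover have "(cmod e0)\<^sup>2 = cmod e0 * cmod e0" by (simp add: power2_eq_square)
      ultimately show ?thesis by linarith
    qed
    then show ?thesis by (smt (verit) zero_le_power2)
  qed
  have h2: "\<bar>x * Re (w * a * cnj a)\<bar> \<le> 2 * cmod w * (cmod a)\<^sup>2"
  proof -
    have "\<bar>Re (w * a * cnj a)\<bar> \<le> cmod (w * a * cnj a)" by (rule abs_Re_le_cmod)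
    also have "\<dots> = cmod w * (cmod a)\<^sup>2" by (simp add: norm_mult power2_eq_square)
    finally have r: "\<bar>Re (w * a * cnj a)\<bar> \<le> cmod w * (cmod a)\<^sup>2" .
    have "\<bar>x * Re (w * a * cnj a)\<bar> = \<bar>x\<bar> * \<bar>Re (w * a * cnj a)\<bar>" by (simp add: abs_mult)
    also have "\<dots> \<le> 2 * (cmod w * (cmod a)\<^sup>2)"
      using assms r by (intro mult_mono) auto
    finally show ?thesis by simp
  qed
  have h3: "cmod e0 \<le> 2 * cmod a + cmod b"
  proof -
    have "cmod e0 \<le> cmod (of_real x * a) + cmod b" unfolding e0_def by (rule norm_triangle_ineq4)
    also have "cmod (of_real x * a) = \<bar>x\<bar> * cmod a" by (simp add: norm_mult)
    also have "\<bar>x\<bar> * cmod a \<le> 2 * cmod a" using assms by (intro mult_right_mono) auto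
    finally show ?thesis by simp
  qed
  have h4: "2 * cmod e0 * (cmod w * cmod a) \<le> 2 * (2 * cmod a + cmod b) * (cmod w * cmod a)"
    using h3 by (intro mult_right_mono mult_left_mono) auto
  have h5: "2 * cmod a * cmod b \<le> (cmod a)\<^sup>2 + (cmod b)\<^sup>2"
    using sum_squares_bound[of "cmod a" "cmod b"] by (simp add: power2_eq_square)
  have h6: "cmod w * (2 * cmod a * cmod b) \<le> cmod w * ((cmod a)\<^sup>2 + (cmod b)\<^sup>2)"
    using h5 by (intro mult_left_mono) auto
  have h7: "cmod w * (cmod b)\<^sup>2 \<ge> 0" by simp
  have eq: "Re ((e0 - w * a) * cnj a) = Re (e0 * cnj a) - Re (w * a * cnj a)"
    by (simp add: algebra_simps)
  have Qi: "(cmod e0)\<^sup>2 + (cmod a)\<^sup>2 - x * Re (e0 * cnj a) = (cmod a)\<^sup>2 + (cmod b)\<^sup>2 - x * Re (a * cnj b)"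
    unfolding e0_def by (rule Q_identity)
  have h4': "2 * cmod e0 * (cmod w * cmod a) \<le> 4 * (cmod w * (cmod a)\<^sup>2) + cmod w * (2 * cmod a * cmod b)"
    using h4 by (simp add: power2_eq_square algebra_simps)
  have h8: "8 * cmod w * ((cmod a)\<^sup>2 + (cmod b)\<^sup>2) = 8 * (cmod w * (cmod a)\<^sup>2) + 8 * (cmod w * (cmod b)\<^sup>2)"
    by (simp add: algebra_simps)
  have h9: "cmod w * ((cmod a)\<^sup>2 + (cmod b)\<^sup>2) = cmod w * (cmod a)\<^sup>2 + cmod w * (cmod b)\<^sup>2"
    by (simp add: algebra_simps)
  have h10: "x * Re ((e0 - w * a) * cnj a) = x * Re (e0 * cnj a) - x * Re (w * a * cnj a)"
    unfolding eq by (simp add: algebra_simps)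
  have h2': "x * Re (w * a * cnj a) \<ge> - (2 * cmod w * (cmod a)\<^sup>2)" using h2 by linarith
  have h12: "cmod w * (cmod a)\<^sup>2 \<ge> 0" by simp
  have h11: "2 * cmod w * (cmod a)\<^sup>2 = 2 * (cmod w * (cmod a)\<^sup>2)" by simp
  have "(cmod (e0 - w * a))\<^sup>2 + (cmod a)\<^sup>2 - x * Re ((e0 - w * a) * cnj a)
     \<ge> (cmod a)\<^sup>2 + (cmod b)\<^sup>2 - x * Re (a * cnj b) - 8 * cmod w * ((cmod a)\<^sup>2 + (cmod b)\<^sup>2)"
    using h1 h2' h4' h6 h7 Qi h8 h9 h10 h11 h12 by linarith
  then show ?thesis unfolding e0_def by (simp add: algebra_simps)
qed



lemma backward_zero:
  fixes \<psi> :: "nat \<Rightarrow> complex"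
  assumes rec: "\<And>n. \<psi> (n+2) = c (n+1) * \<psi> (n+1) - \<psi> n"
  shows "(\<forall>m\<ge>N. \<psi> m = 0) \<Longrightarrow> \<psi> m = 0"
proof (induction N arbitrary: m)
  case 0 then show ?case by simp
next
  case (Suc N)
  have "\<psi> N = 0"
  proof -
    have "\<psi> (N+2) = c (N+1) * \<psi> (N+1) - \<psi> N" by (rule rec)
    moreover have "\<psi> (N+2) = 0" "\<psi> (N+1) = 0" using Suc.prems by auto
    ultimately show ?thesis by simp
  qed
  then have "\<forall>m\<ge>N. \<psi> m = 0" using Suc.prems by (metis le_antisym not_less_eq_eq)
  then show ?case by (rule Suc.IH)
qed

lemma no_embedded:
  fixes \<psi> v :: "nat \<Rightarrow> complex" and x :: real
  assumes sv: "summable (\<lambda>n. cmod (v n))" and l2: "l2seq \<psi>" and ax: "\<bar>x\<bar> < 2"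
    and rec: "\<And>n. \<psi> (n+2) = (of_real x - v (n+1)) * \<psi> (n+1) - \<psi> n"
  shows "\<psi> = (\<lambda>_. 0)"
proof -
  define Q where "Q n = (cmod (\<psi> (n+1)))\<^sup>2 + (cmod (\<psi> n))\<^sup>2 - x * Re (\<psi> (n+1) * cnj (\<psi> n))" for n
  define S where "S n = (cmod (\<psi> (n+1)))\<^sup>2 + (cmod (\<psi> n))\<^sup>2" for n
  define \<delta> where "\<delta> = 1 - \<bar>x\<bar> / 2"
  have dpos: "\<delta> > 0" using ax unfolding \<delta>_def by simp
  have QS: "\<delta> * S n \<le> Q n" for n
  proof -
    have "\<bar>x * Re (\<psi> (n+1) * cnj (\<psi> n))\<bar> \<le> \<bar>x\<bar> * S n / 2" unfolding S_def by (rule re_bound)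
    then have "x * Re (\<psi> (n+1) * cnj (\<psi> n)) \<le> \<bar>x\<bar> * S n / 2" by (rule abs_le_D1)
    moreover have "Q n = S n - x * Re (\<psi> (n+1) * cnj (\<psi> n))" unfolding Q_def S_def by simp
    moreover have "\<delta> * S n = S n - \<bar>x\<bar> * S n / 2" unfolding \<delta>_def by (simp add: algebra_simps)
    ultimately show ?thesis by linarith
  qed
  have Q0: "Q n \<ge> 0" for n
    using QS[of n] dpos unfolding S_def by (smt (verit) zero_le_power2 mult_nonneg_nonneg)
  have step: "Q (n+1) \<ge> Q n - 8 * cmod (v (n+1)) * S n" for n
  proof -
    have e: "\<psi> (n+2) = of_real x * \<psi> (n+1) - \<psi> n - v (n+1) * \<psi> (n+1)"
      using rec[of n] by (simp add: algebra_simps)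
    have "Q (n+1) = (cmod (\<psi> (n+2)))\<^sup>2 + (cmod (\<psi> (n+1)))\<^sup>2 - x * Re (\<psi> (n+2) * cnj (\<psi> (n+1)))"
      unfolding Q_def by (simp add: numeral_2_eq_2)
    also have "\<dots> \<ge> Q n - 8 * cmod (v (n+1)) * S n"
      unfolding e Q_def S_def by (rule Q_step[OF ax])
    finally show ?thesis .
  qed
  define \<epsilon> where "\<epsilon> n = 8 * cmod (v (n+1)) / \<delta>" for n
  have eps0: "\<epsilon> n \<ge> 0" for n unfolding \<epsilon>_def using dpos by simp
  have step2: "Q (n+1) \<ge> Q n * (1 - \<epsilon> n)" for n
  proof -
    have "S n \<le> Q n / \<delta>" using QS[of n] dpos by (simp add: pos_le_divide_eq mult.commute)
    then have "8 * cmod (v (n+1)) * S n \<le> 8 * cmod (v (n+1)) * (Q n / \<delta>)"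
      by (intro mult_left_mono) auto
    then show ?thesis using step[of n] unfolding \<epsilon>_def by (simp add: algebra_simps)
  qed
  have seps: "summable \<epsilon>"
  proof -
    have "summable (\<lambda>n. cmod (v (Suc n)))" using sv by (subst summable_Suc_iff)
    then have "summable (\<lambda>n. 8 * cmod (v (Suc n)) / \<delta>)"
      by (intro summable_divide summable_mult)
    then show ?thesis unfolding \<epsilon>_def by simp
  qed
  obtain N where N: "\<And>m n. m \<ge> N \<Longrightarrow> norm (sum \<epsilon> {m..<n}) < 1/2"
  proof -
    have "\<forall>e>0. \<exists>N. \<forall>m\<ge>N. \<forall>n. norm (sum \<epsilon> {m..<n}) < e" using seps unfolding summable_Cauchy .
    then have "\<exists>N. \<forall>m\<ge>N. \<forall>n. norm (sum \<epsilon> {m..<n}) < 1/2" by (meson zero_less_divide_iff zero_less_one zero_less_numeral)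
    then show ?thesis using that by blast
  qed
  have sumle: "sum \<epsilon> {m..<n} < 1/2" if "m \<ge> N" for m n
    using N[OF that, of n] by simp
  have sumge: "sum \<epsilon> {m..<n} \<ge> 0" for m n using eps0 by (simp add: sum_nonneg)
  have psi0: "\<psi> \<longlonglongrightarrow> 0" using l2 by (rule l2_tendsto)
  have psi1: "(\<lambda>n. \<psi> (n+1)) \<longlonglongrightarrow> 0" using LIMSEQ_ignore_initial_segment[OF psi0, of 1] .
  have Qlim: "Q \<longlonglongrightarrow> 0"
  proof -
    have "(\<lambda>n. (cmod (\<psi> (n+1)))\<^sup>2 + (cmod (\<psi> n))\<^sup>2 - x * Re (\<psi> (n+1) * cnj (\<psi> n)))
       \<longlonglongrightarrow> (cmod 0)\<^sup>2 + (cmod 0)\<^sup>2 - x * Re (0 * cnj 0)"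
      by (intro tendsto_intros psi0 psi1)
    then show ?thesis unfolding Q_def by simp
  qed
  have zeroM: "\<psi> M = 0" if M: "M \<ge> N" for M
  proof -
    have lower: "Q n \<ge> Q M * (1 - sum \<epsilon> {M..<n})" if "M \<le> n" for n
      using that
    proof (induction n rule: dec_induct)
      case base then show ?case by simp
    next
      case (step n)
      have a1: "1 - \<epsilon> n \<ge> 0" using sumle[OF M, of "Suc n"] sumle[of n "Suc n"] step.hyps M by simp
      have "Q (n+1) \<ge> Q n * (1 - \<epsilon> n)" by (rule step2)
      also have "Q n * (1 - \<epsilon> n) \<ge> Q M * (1 - sum \<epsilon> {M..<n}) * (1 - \<epsilon> n)"
        using step.IH a1 by (intro mult_right_mono) auto
      also have "Q M * (1 - sum \<epsilon> {M..<n}) * (1 - \<epsilon> n) \<ge> Q M * (1 - sum \<epsilon> {M..<Suc n})"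
      proof -
        have "Q M * (sum \<epsilon> {M..<n} * \<epsilon> n) \<ge> 0" using Q0 sumge eps0 by simp
        then show ?thesis using step.hyps by (simp add: algebra_simps)
      qed
      finally show ?case by simp
    qed
    have "Q M / 2 \<le> 0"
    proof (rule LIMSEQ_le_const[OF Qlim])
      show "\<exists>N'. \<forall>n\<ge>N'. Q M / 2 \<le> Q n"
      proof (intro exI allI impI)
        fix n assume "M \<le> n"
        have "Q M * (1 - sum \<epsilon> {M..<n}) \<ge> Q M * (1/2)"
          using sumle[OF M, of n] Q0[of M] by (intro mult_left_mono) auto
        then show "Q M / 2 \<le> Q n" using lower[OF \<open>M \<le> n\<close>] by simp
      qed
    qed
    then have "\<delta> * S M \<le> 0" using QS[of M] by simp
    then have "S M \<le> 0" using dpos by (simp add: mult_le_0_iff)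
    then show ?thesis unfolding S_def by (smt (verit) zero_le_power2 zero_less_norm_iff zero_less_power2)
  qed
  have "\<psi> m = 0" for m
    by (rule backward_zero[of \<psi> "\<lambda>n. of_real x - v n" N]) (use rec zeroM in auto)
  then show ?thesis by auto
qed



lemma free_gen:
  fixes k c1 c2 :: complex
  assumes "k \<noteq> 0"
  shows "(c1 * inverse k ^ j + c2 * k ^ j) + (c1 * inverse k ^ (j+2) + c2 * k ^ (j+2))
       = (k + inverse k) * (c1 * inverse k ^ (j+1) + c2 * k ^ (j+1))"
proof -
  have i: "inverse k * k = 1" using assms by simp
  have a: "inverse k ^ (j+2) = inverse k ^ (j+1) * inverse k" and b: "k ^ (j+2) = k ^ (j+1) * k"
    and c: "inverse k ^ (j+1) = inverse k ^ j * inverse k" and d: "k ^ (j+1) = k ^ j * k"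
    by (simp_all add: numeral_2_eq_2)
  have "k * (inverse k ^ j * inverse k) = inverse k ^ j" using i by (simp add: mult.commute)
  moreover have "inverse k * (k ^ j * k) = k ^ j" using i by (simp add: mult.commute mult.left_commute)
  have e: "k * (inverse k * x) = x" for x using assms by (simp add: mult.assoc[symmetric])
  show ?thesis unfolding a b c d by (simp add: algebra_simps e)
qed

lemma phichi:
  fixes k r :: complex
  assumes k0: "k \<noteq> 0" and "1 \<le> s" "s \<le> t"
  shows "(inverse k ^ s - r * k ^ s / k) * k ^ t = k ^ (t - s) * (1 - r * k ^ (2 * s - 1))"
proof -
  obtain s' where s: "s = Suc s'" using assms(2) by (cases s) auto
  obtain d where t: "t = s + d" using assms(3) le_Suc_ex by blast
  have p1: "inverse k ^ s * k ^ t = k ^ d"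
  proof -
    have "inverse k ^ s * k ^ t = (inverse k ^ s * k ^ s) * k ^ d" unfolding t power_add by (simp add: mult.assoc)
    also have "inverse k ^ s * k ^ s = 1" unfolding power_mult_distrib[symmetric] using k0 by simp
    finally show ?thesis by simp
  qed
  have p2: "k ^ s / k = k ^ s'" unfolding s using k0 by simp
  have p3: "k ^ s' * k ^ t = k ^ d * k ^ (2 * s - 1)"
  proof -
    have "s' + t = d + (2 * s - 1)" unfolding s t by simp
    then show ?thesis by (metis power_add)
  qed
  have "(inverse k ^ s - r * k ^ s / k) * k ^ t = inverse k ^ s * k ^ t - r * ((k ^ s / k) * k ^ t)"
    by (simp add: algebra_simps)
  also have "\<dots> = k ^ d - r * (k ^ d * k ^ (2 * s - 1))" unfolding p1 p2 p3 ..
  also have "\<dots> = k ^ (t - s) * (1 - r * k ^ (2 * s - 1))" unfolding t by (simp add: algebra_simps)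
  finally show ?thesis .
qed

lemma outside:
  fixes a z :: complex and \<psi> v :: "nat \<Rightarrow> complex"
  assumes sv: "summable (\<lambda>n. cmod (v n))" and l2: "l2seq \<psi>" and nz: "\<psi> \<noteq> (\<lambda>_. 0)"
    and eig: "\<forall>n. jacobi_apply a v \<psi> n = z * \<psi> n"
    and zout: "z \<notin> complex_of_real ` {-2..2}" and ginf: "g_fun a z \<noteq> \<infinity>"
  shows "ereal (sqrt (cmod (z\<^sup>2 - 4))) \<le> g_fun a z * ereal (l1norm v)"
proof -
  define k where "k = kpar z"
  have kp: "0 < cmod k" "cmod k < 1" "z = k + inverse k" using kpar_props[OF zout] unfolding k_def by auto
  have k0: "k \<noteq> 0" using kp by auto
  have ak: "1 - a * k \<noteq> 0" using ginf unfolding g_fun_def Let_def k_def by auto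
  define r where "r = (k - a) / (1 - a * k)"
  have gdef: "g_fun a z = (SUP n\<in>{1::nat..}. ereal (cmod (1 - r * k ^ (2 * n - 1))))"
    using ak unfolding g_fun_def Let_def k_def r_def by simp
  have tle: "ereal (cmod (1 - r * k ^ (2 * n - 1))) \<le> g_fun a z" if "1 \<le> n" for n
    unfolding gdef using that by (intro SUP_upper) auto
  have gnn: "g_fun a z \<ge> 0" by (rule order_trans[OF _ tle[of 1]]) simp_all
  define G where "G = real_of_ereal (g_fun a z)"
  have gG: "g_fun a z = ereal G" unfolding G_def using ginf gnn
    by (cases "g_fun a z") auto
  have tb: "cmod (1 - r * k ^ (2 * n - 1)) \<le> G" if "1 \<le> n" for n
    using tle[OF that] unfolding gG by simp
  have G0: "G \<ge> 0" using tb[of 1] by (meson norm_ge_zero order_trans order_refl)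
  define q where "q j = (if j = 0 then a * \<psi> 0 else \<psi> (j - 1))" for j
  define f where "f i = - v i * \<psi> i" for i
  have qrec: "q (j+2) = z * q (j+1) + f j - q j" for j
  proof (cases j)
    case 0
    then show ?thesis using eig[rule_format, of 0] unfolding q_def f_def jacobi_apply_def
      by (simp add: algebra_simps)
  next
    case (Suc i)
    then show ?thesis using eig[rule_format, of j] unfolding q_def f_def jacobi_apply_def
      by (simp add: algebra_simps)
  qed
  define ch where "ch j = k ^ j" for j
  define ph where "ph j = inverse k ^ j - r * k ^ j / k" for j
  have fchi: "ch (j+2) = z * ch (j+1) - ch j" for j
    using free_gen[OF k0, of 0 j 1] unfolding ch_def kp(3) by (simp add: algebra_simps)
  have fphi: "ph (j+2) = z * ph (j+1) - ph j" for j
  proof -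
    have e: "ph n = 1 * inverse k ^ n + (- r / k) * k ^ n" for n unfolding ph_def by simp
    have "ph j + ph (j+2) = z * ph (j+1)" unfolding e kp(3) by (rule free_gen[OF k0])
    then show ?thesis by (simp add: algebra_simps)
  qed
  define Wr where "Wr y j = q j * y (j+1) - q (j+1) * y j" for y :: "nat \<Rightarrow> complex" and j
  have Wstep: "Wr y (j+1) = Wr y j - y (j+1) * f j" if fy: "\<And>j. y (j+2) = z * y (j+1) - y j" for y j
  proof -
    have "Wr y (j+1) = q (j+1) * y (j+2) - q (j+2) * y (j+1)" unfolding Wr_def by (simp add: numeral_2_eq_2)
    also have "\<dots> = q (j+1) * (z * y (j+1) - y j) - (z * q (j+1) + f j - q j) * y (j+1)"
      unfolding fy qrec ..
    also have "\<dots> = Wr y j - y (j+1) * f j" unfolding Wr_def by (simp add: algebra_simps)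
    finally show ?thesis .
  qed
  have B0: "Wr ph 0 = 0"
  proof -
    have "a * ph 1 = ph 0" unfolding ph_def r_def using k0 ak
      by (simp add: field_simps)
    then show ?thesis unfolding Wr_def q_def by simp
  qed
  have Bj: "Wr ph j = - (\<Sum>i<j. ph (i+1) * f i)" for j
  proof (induction j)
    case 0 then show ?case using B0 by simp
  next
    case (Suc j) then show ?case using Wstep[of ph j, OF fphi] by simp
  qed
  define W where "W = k - inverse k"
  have Wpc: "ph j * ch (j+1) - ch j * ph (j+1) = W" for j
    unfolding ph_def ch_def W_def using k0 by (simp add: field_simps power_add)
  have key: "q j * W = ph j * Wr ch j - ch j * Wr ph j" for j
    unfolding Wr_def Wpc[symmetric, of j] by (simp add: algebra_simps)
  define K where "K j i = (if i < j then ch j * ph (i+1) else ph j * ch (i+1))" for j i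
  have repr: "q j * W = ph j * Wr ch N + (\<Sum>i<N. K j i * f i)" if "j \<le> N" for j N
    using that
  proof (induction N rule: dec_induct)
    case base
    have "(\<Sum>i<j. K j i * f i) = (\<Sum>i<j. ch j * (ph (i+1) * f i))"
      unfolding K_def by (intro sum.cong) auto
    also have "\<dots> = ch j * (\<Sum>i<j. ph (i+1) * f i)" by (rule sum_distrib_left[symmetric])
    finally have s: "(\<Sum>i<j. K j i * f i) = ch j * (\<Sum>i<j. ph (i+1) * f i)" .
    show ?case unfolding s key[of j] Bj[of j] by simp
  next
    case (step n)
    have Kjn: "K j n = ph j * ch (n+1)" unfolding K_def using step.hyps by simp
    have s: "(\<Sum>i<Suc n. K j i * f i) = (\<Sum>i<n. K j i * f i) + ph j * ch (n+1) * f n"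
      using Kjn by simp
    have w: "Wr ch n = Wr ch (Suc n) + ch (n+1) * f n" using Wstep[of ch n, OF fchi] by simp
    have "q j * W = ph j * (Wr ch (Suc n) + ch (n+1) * f n) + (\<Sum>i<n. K j i * f i)"
      using step.IH unfolding w .
    then show ?case unfolding s by (simp add: algebra_simps)
  qed
  have Kb: "cmod (K j i) \<le> G" if "1 \<le> j" for j i
  proof -
    have gen: "cmod (ph s * ch t) \<le> G" if "1 \<le> s" "s \<le> t" for s t
    proof -
      have "ph s * ch t = k ^ (t - s) * (1 - r * k ^ (2 * s - 1))"
        unfolding ph_def ch_def by (rule phichi[OF k0 that])
      then have "cmod (ph s * ch t) = cmod k ^ (t - s) * cmod (1 - r * k ^ (2 * s - 1))"
        by (simp add: norm_mult norm_power)
      also have "\<dots> \<le> 1 * G"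
        using tb[OF that(1)] kp by (intro mult_mono power_le_one) auto
      finally show ?thesis by simp
    qed
    show ?thesis
    proof (cases "i < j")
      case True
      then show ?thesis unfolding K_def using gen[of "i+1" j] that by (simp add: mult.commute)
    next
      case False
      then show ?thesis unfolding K_def using gen[of j "i+1"] that by simp
    qed
  qed
  have psi0: "\<psi> \<longlonglongrightarrow> 0" using l2 by (rule l2_tendsto)
  obtain B where B: "B > 0" "\<And>n. cmod (\<psi> n) \<le> B"
    using convergent_imp_Bseq[OF convergentI[OF psi0]] unfolding Bseq_def by auto
  have sf: "summable (\<lambda>i. cmod (f i))"
  proof (rule summable_comparison_test)
    show "\<exists>N. \<forall>n\<ge>N. norm (cmod (f n)) \<le> cmod (v n) * B"
      unfolding f_def using B by (auto simp: norm_mult intro!: mult_left_mono)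
    show "summable (\<lambda>n. cmod (v n) * B)" using sv by (rule summable_mult2)
  qed
  define T where "T = (\<Sum>i. cmod (f i))"
  have T0: "T \<ge> 0" unfolding T_def by (intro suminf_nonneg sf) auto
  have q0: "q \<longlonglongrightarrow> 0"
  proof (rule LIMSEQ_imp_Suc)
    show "(\<lambda>n. q (Suc n)) \<longlonglongrightarrow> 0" unfolding q_def using psi0 by simp
  qed
  have chi0: "ch \<longlonglongrightarrow> 0" unfolding ch_def using kp by (intro LIMSEQ_power_zero) simp
  have A0: "(\<lambda>N. Wr ch N) \<longlonglongrightarrow> 0"
  proof -
    have "(\<lambda>N. q N * ch (N+1) - q (N+1) * ch N) \<longlonglongrightarrow> 0 * 0 - 0 * 0"
      by (intro tendsto_intros q0 chi0 LIMSEQ_ignore_initial_segment)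
    then show ?thesis unfolding Wr_def by simp
  qed
  have bound: "cmod (q j * W) \<le> G * T" if "1 \<le> j" for j
  proof -
    have lim: "(\<lambda>N. cmod (ph j) * cmod (Wr ch N) + G * T) \<longlonglongrightarrow> cmod (ph j) * cmod 0 + G * T"
      by (intro tendsto_intros A0)
    then have lim': "(\<lambda>N. cmod (ph j) * cmod (Wr ch N) + G * T) \<longlonglongrightarrow> G * T" by simp
    show ?thesis
    proof (rule LIMSEQ_le_const[OF lim'])
    show "\<exists>N0. \<forall>N\<ge>N0. cmod (q j * W) \<le> cmod (ph j) * cmod (Wr ch N) + G * T"
    proof (intro exI allI impI)
      fix N assume "j \<le> N"
      have "cmod (q j * W) \<le> cmod (ph j * Wr ch N) + cmod (\<Sum>i<N. K j i * f i)"
        unfolding repr[OF \<open>j \<le> N\<close>] by (rule norm_triangle_ineq)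
      also have "cmod (\<Sum>i<N. K j i * f i) \<le> (\<Sum>i<N. G * cmod (f i))"
      proof -
        have "cmod (\<Sum>i<N. K j i * f i) \<le> (\<Sum>i<N. cmod (K j i * f i))" by (rule norm_sum)
        also have "\<dots> \<le> (\<Sum>i<N. G * cmod (f i))"
          by (intro sum_mono) (simp add: norm_mult mult_right_mono Kb[OF that])
        finally show ?thesis .
      qed
      also have "(\<Sum>i<N. G * cmod (f i)) = G * (\<Sum>i<N. cmod (f i))" by (simp add: sum_distrib_left)
      also have "\<dots> \<le> G * T" unfolding T_def
        using G0 by (intro mult_left_mono sum_le_suminf sf) auto
      finally show "cmod (q j * W) \<le> cmod (ph j) * cmod (Wr ch N) + G * T"
        by (simp add: norm_mult)
    qed
  qed
  qed
  have bpsi: "cmod (\<psi> m) * cmod W \<le> G * T" for m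
    using bound[of "m+1"] unfolding q_def by (simp add: norm_mult)
  define L where "L = l1norm v"
  have TW: "T * cmod W \<le> G * T * L"
  proof -
    have s1: "summable (\<lambda>m. cmod (v m) * (cmod (\<psi> m) * cmod W))"
      using summable_mult2[OF sf, of "cmod W"] unfolding f_def by (simp add: norm_mult mult.assoc)
    have s2: "summable (\<lambda>m. cmod (v m) * (G * T))" using sv by (rule summable_mult2)
    have "T * cmod W = (\<Sum>m. cmod (f m) * cmod W)"
      unfolding T_def by (rule suminf_mult2[OF sf])
    also have "\<dots> = (\<Sum>m. cmod (v m) * (cmod (\<psi> m) * cmod W))"
      unfolding f_def by (simp add: norm_mult mult.assoc)
    also have "\<dots> \<le> (\<Sum>m. cmod (v m) * (G * T))"
      using s1 s2 bpsi by (intro suminf_le) (auto intro: mult_left_mono)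
    also have "\<dots> = G * T * L" unfolding L_def l1norm_def using suminf_mult2[OF sv, of "G * T"]
      by (simp add: mult.commute)
    finally show ?thesis .
  qed
  have Wnz: "W \<noteq> 0"
  proof
    assume "W = 0"
    then have "k * k = 1" unfolding W_def using k0 by (simp add: field_simps)
    then have "cmod k * cmod k = 1" by (metis norm_mult norm_one)
    moreover have "cmod k * cmod k < 1 * 1" using kp by (intro mult_strict_mono) auto
    ultimately show False by simp
  qed
  have Tpos: "T > 0"
  proof (rule ccontr)
    assume "\<not> T > 0"
    then have "T = 0" using T0 by simp
    have "\<psi> m = 0" for m
    proof -
      have "cmod (\<psi> m) * cmod W \<le> 0" using bpsi[of m] \<open>T = 0\<close> by simp
      then have "cmod (\<psi> m) \<le> 0" using Wnz by (simp add: mult_le_0_iff)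
      then show ?thesis by simp
    qed
    then show False using nz by auto
  qed
  have "T * cmod W \<le> T * (G * L)" using TW by (simp add: mult.assoc mult.left_commute)
  then have WGL: "cmod W \<le> G * L" using Tpos by simp
  have zW: "z\<^sup>2 - 4 = W\<^sup>2" unfolding kp(3) W_def using k0 by (simp add: field_simps power2_eq_square)
  have "sqrt (cmod (z\<^sup>2 - 4)) = cmod W" unfolding zW by (simp add: norm_power)
  then show ?thesis unfolding gG L_def[symmetric] using WGL by simp
qed


theorem theorem3p1:
  fixes a :: complex and v :: "nat \<Rightarrow> complex"
  assumes "summable (\<lambda>n. cmod (v n))"
  shows "point_spectrum a v \<subseteq>
           {2, -2} \<union>
           {z. z \<notin> complex_of_real ` {-2..2} \<and>
               (g_fun a z = \<infinity> \<or>
                ereal (sqrt (cmod (z\<^sup>2 - 4))) \<le> g_fun a z * ereal (l1norm v))}"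
proof
  fix z assume "z \<in> point_spectrum a v"
  then obtain \<psi> where l2: "l2seq \<psi>" and nz: "\<psi> \<noteq> (\<lambda>_. 0)"
    and eig: "\<forall>n. jacobi_apply a v \<psi> n = z * \<psi> n"
    unfolding point_spectrum_def by blast
  show "z \<in> {2, -2} \<union>
           {z. z \<notin> complex_of_real ` {-2..2} \<and>
               (g_fun a z = \<infinity> \<or>
                ereal (sqrt (cmod (z\<^sup>2 - 4))) \<le> g_fun a z * ereal (l1norm v))}"
  proof (cases "z \<in> complex_of_real ` {-2..2}")
    case True
    then obtain x where x: "x \<in> {-2..2}" "z = complex_of_real x" by blast
    show ?thesis
    proof (cases "\<bar>x\<bar> < 2")
      case True
      have rec: "\<psi> (n+2) = (of_real x - v (n+1)) * \<psi> (n+1) - \<psi> n" for n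
        using eig[rule_format, of "n+1"] unfolding jacobi_apply_def x(2)
        by (simp add: algebra_simps numeral_2_eq_2)
      have "\<psi> = (\<lambda>_. 0)" by (rule no_embedded[OF assms l2 True rec])
      then show ?thesis using nz by simp
    next
      case False
      then have "x = 2 \<or> x = -2" using x(1) by auto
      then show ?thesis using x(2) by auto
    qed
  next
    case False
    show ?thesis
    proof (cases "g_fun a z = \<infinity>")
      case True then show ?thesis using False by simp
    next
      case ginf: False
      show ?thesis using outside[OF assms l2 nz eig False ginf] False by simp
    qed
  qed
qed

end
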